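(* Let $a\ge2$, $d\ge1$ and $s$ be integers with $\gcd(a,d)=1$ and $1\le s<a$. Let $\mathit{NR}$ be the set of positive integers not representable as $\sum_{i=0}^s(a+id)x_i$ with $x_0,\dots,x_s$ nonnegative integers, and let $S_m=\sum_{n\in\mathit{NR}}n^m$. Then for every integer $m\ge1$, \[ mS_{m-1}=a^{m-1}\sum_{n=0}^{a-1}B_m\!\left(\lceil n/s\rceil+\frac{nd}{a}\right)-B_m . \]
   Context: $B_m(x)$ denotes the Bernoulli polynomials, defined by $\frac{te^{tx}}{e^t-1}=\sum_{m\ge0}B_m(x)\frac{t^m}{m!}$, and $B_m=B_m(0)$. $\lceil x\rceil$ is the least integer not less than $x$. *)

theory Defs
  imports Complex_Main "HOL-Computational_Algebra.Formal_Power_Series"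
begin

definition bernpoly :: "nat \<Rightarrow> real \<Rightarrow> real" where
  "bernpoly m x = fact m * fps_nth (fps_X * fps_exp x / (fps_exp 1 - 1)) m"

definition bernoulli_num :: "nat \<Rightarrow> real" where
  "bernoulli_num m = bernpoly m 0"

definition NR :: "nat \<Rightarrow> nat \<Rightarrow> nat \<Rightarrow> nat set" where
  "NR a d s = {n. 0 < n \<and> \<not> (\<exists>x :: nat \<Rightarrow> nat. n = (\<Sum>i = 0..s. (a + i * d) * x i))}"

definition powsumNR :: "nat \<Rightarrow> nat \<Rightarrow> nat \<Rightarrow> nat \<Rightarrow> real" where
  "powsumNR a d s m = (\<Sum>n\<in>NR a d s. real n ^ m)"

end

theory Submission
  imports Defs
begin
unbundle fps_syntax

definition GF :: "real \<Rightarrow> real fps" where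
  "GF x = fps_X * fps_exp x / (fps_exp 1 - 1)"

lemma bernpoly_GF: "bernpoly m x = fact m * (GF x $ m)"
  by (simp add: bernpoly_def GF_def)

lemma E1_ne: "fps_exp (1::real) - 1 \<noteq> 0"
proof
  assume "fps_exp (1::real) - 1 = 0"
  hence "(fps_exp (1::real) - 1) $ 1 = 0" by simp
  thus False by simp
qed

lemma sub_E1: "subdegree (fps_exp (1::real) - 1) = 1"
  by (rule subdegreeI) auto

lemma GF_mult: "GF x * (fps_exp 1 - 1) = fps_X * fps_exp x"
proof -
  have "fps_X * fps_exp x \<noteq> (0::real fps)"
  proof
    assume "fps_X * fps_exp x = (0::real fps)"
    hence "(fps_X * fps_exp x) $ 1 = (0::real)" by simp
    thus False by simp
  qed
  moreover have "subdegree (fps_X * fps_exp x) = 1"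
    by (rule subdegreeI) auto
  ultimately show ?thesis unfolding GF_def
    using fps_times_divide_eq[OF E1_ne] sub_E1 by simp
qed

lemma GF_diff: "GF (x+1) - GF x = fps_X * fps_exp x"
proof -
  have "(GF (x+1) - GF x) * (fps_exp 1 - 1) = GF (x+1) * (fps_exp 1 - 1) - GF x * (fps_exp 1 - 1)"
    by (simp add: algebra_simps)
  also have "\<dots> = fps_X * fps_exp (x+1) - fps_X * fps_exp x" by (simp only: GF_mult)
  also have "\<dots> = (fps_X * fps_exp x) * (fps_exp 1 - 1)"
    by (simp add: fps_exp_add_mult algebra_simps)
  finally have "(GF (x+1) - GF x) * (fps_exp 1 - 1) = (fps_X * fps_exp x) * (fps_exp 1 - 1)" .
  thus ?thesis using E1_ne by simp
qed

lemma bp_diff: assumes "m \<ge> 1"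
  shows "bernpoly m (x+1) - bernpoly m x = real m * x^(m-1)"
proof -
  have "(GF (x+1) - GF x) $ m = x^(m-1) / fact (m-1)"
    using assms by (simp add: GF_diff)
  hence "bernpoly m (x+1) - bernpoly m x = fact m * (x^(m-1) / fact (m-1))"
    by (simp add: bernpoly_GF algebra_simps)
  also have "\<dots> = real m * x^(m-1)"
    using assms by (cases m) (auto simp: field_simps)
  finally show ?thesis .
qed

lemma bp_sum: assumes "m \<ge> 1"
  shows "real m * (\<Sum>t<K. (x + real t)^(m-1)) = bernpoly m (x + real K) - bernpoly m x"
proof (induction K)
  case 0 then show ?case by simp
next
  case (Suc K)
  have "bernpoly m (x + real K + 1) - bernpoly m (x + real K) = real m * (x + real K)^(m-1)"
    using bp_diff[OF assms] by simp
  with Suc show ?case by (simp add: algebra_simps)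
qed

definition fscale :: "real \<Rightarrow> real fps \<Rightarrow> real fps" where
  "fscale c f = Abs_fps (\<lambda>n. c^n * f $ n)"

lemma fscale_nth[simp]: "fscale c f $ n = c^n * f $ n"
  by (simp add: fscale_def)

lemma fscale_mult: "fscale c (f * g) = fscale c f * fscale c g"
proof (rule fps_ext)
  fix n
  have "fscale c (f*g) $ n = (\<Sum>i=0..n. c^i * f$i * (c^(n-i) * g$(n-i)))"
    by (simp add: fps_mult_nth sum_distrib_left algebra_simps power_add[symmetric])
  also have "\<dots> = (fscale c f * fscale c g) $ n"
    by (simp add: fps_mult_nth)
  finally show "fscale c (f*g) $ n = (fscale c f * fscale c g) $ n" .
qed

lemma fscale_diff: "fscale c (f - g) = fscale c f - fscale c g"
  by (rule fps_ext) (simp add: algebra_simps)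

lemma fscale_exp: "fscale c (fps_exp x) = fps_exp (c*x)"
  by (rule fps_ext) (simp add: power_mult_distrib)

lemma fscale_one: "fscale c 1 = 1"
  by (rule fps_ext) simp

lemma fscale_X: "fscale c fps_X = fps_const c * fps_X"
proof (rule fps_ext)
  fix n show "fscale c fps_X $ n = (fps_const c * fps_X) $ n"
    by (cases "n = 1") (auto simp: fps_X_def)
qed

lemma geom_exp: "(\<Sum>r<a. fps_exp (real r * y)) * (fps_exp y - 1) = fps_exp (real a * y) - 1"
  by (induction a) (simp_all add: algebra_simps fps_exp_add_mult[symmetric])

lemma bp_mult: fixes a :: nat assumes "a \<ge> 1" and m1: "m \<ge> 1"
  shows "real a ^ (m-1) * (\<Sum>r<a. bernpoly m (real r / real a)) = bernoulli_num m"
proof -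
  define y :: real where "y = 1 / real a"
  have ay: "real a * y = 1" using assms by (simp add: y_def)
  have ne2: "fps_exp y - 1 \<noteq> (0::real fps)"
  proof
    assume "fps_exp y - 1 = (0::real fps)"
    hence "(fps_exp y - 1) $ 1 = (0::real)" by simp
    thus False using ay by simp
  qed
  have s1: "fscale y (GF 0) * (fps_exp y - 1) = fps_const y * fps_X"
    using arg_cong[OF GF_mult[of 0], of "fscale y"]
    by (simp add: fscale_mult fscale_diff fscale_exp fscale_one fscale_X)
  have "(\<Sum>r<a. GF (real r * y)) * (fps_exp 1 - 1) = fps_X * (\<Sum>r<a. fps_exp (real r * y))"
    by (simp add: sum_distrib_left sum_distrib_right GF_mult)
  hence "(\<Sum>r<a. GF (real r * y)) * (fps_exp 1 - 1) * (fps_exp y - 1) = fps_X * (fps_exp 1 - 1)"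
    using geom_exp[where a=a and y=y] ay by (simp add: mult.assoc)
  also have "\<dots> = fps_const (real a) * fscale y (GF 0) * (fps_exp y - 1) * (fps_exp 1 - 1)"
    using s1 ay by (simp add: algebra_simps fps_const_mult[symmetric])
  finally have "(\<Sum>r<a. GF (real r * y)) * ((fps_exp 1 - 1) * (fps_exp y - 1)) =
       fps_const (real a) * fscale y (GF 0) * ((fps_exp y - 1) * (fps_exp 1 - 1))"
    by (simp add: mult.assoc)
  hence eq: "(\<Sum>r<a. GF (real r * y)) = fps_const (real a) * fscale y (GF 0)"
    using E1_ne ne2 by (simp add: mult.commute)
  have "(\<Sum>r<a. bernpoly m (real r / real a)) = fact m * (\<Sum>r<a. GF (real r * y)) $ m"
    by (simp add: bernpoly_GF y_def fps_sum_nth sum_distrib_left)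
  also have "\<dots> = real a * y^m * bernoulli_num m"
    by (simp add: eq bernoulli_num_def bernpoly_GF)
  finally have "(\<Sum>r<a. bernpoly m (real r / real a)) = real a * y^m * bernoulli_num m" .
  moreover have "real a ^ (m-1) * (real a * y^m) = 1"
  proof (cases m)
    case 0 then show ?thesis using m1 by simp
  next
    case (Suc k)
    have "real a ^ (m-1) * (real a * y^m) = (real a * y)^m"
      using Suc by (simp add: power_mult_distrib)
    then show ?thesis using ay by simp
  qed
  ultimately show ?thesis by (metis mult.assoc mult_1)
qed


lemma rep_construct:
  fixes s K J :: nat
  assumes "s \<ge> 1" "J \<le> s * K"
  shows "\<exists>x :: nat \<Rightarrow> nat. (\<Sum>i=0..s. x i) = K \<and> (\<Sum>i=0..s. i * x i) = J"
proof (cases "J div s = K")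
  case True
  hence "J mod s = 0" using assms
    by (metis add_le_same_cancel1 div_mult_mod_eq le_zero_eq mult.commute)
  hence J: "J = s * K" using True by (metis div_mult_mod_eq add_0_right mult.commute)
  have "(\<Sum>i=0..s. i * (if i = s then K else 0)) = (\<Sum>i=0..s. if i = s then s*K else 0)"
    by (rule sum.cong) auto
  then show ?thesis
    by (intro exI[of _ "\<lambda>i. if i = s then K else 0"]) (simp add: J)
next
  case False
  define q r where "q = J div s" and "r = J mod s"
  have "q \<le> s * K div s" unfolding q_def by (rule div_le_mono[OF assms(2)])
  hence qK: "q < K" using False assms unfolding q_def by simp
  have rs: "r < s" using assms unfolding r_def by simp
  have J: "J = s*q + r" unfolding q_def r_def by simp
  define x where "x i = (if i = s then q else 0) + (if i = r then 1 else 0) + (if i = 0 then K-q-1 else 0)" for i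
  have "(\<Sum>i=0..s. x i) = q + 1 + (K - q - 1)"
    using rs by (simp add: x_def sum.distrib)
  moreover have "(\<Sum>i=0..s. i * x i) = s*q + r"
    using rs by (simp add: x_def sum.distrib algebra_simps if_distrib[of "\<lambda>v. _ * v"] cong: if_cong)
  ultimately show ?thesis using qK J by (intro exI[of _ x]) auto
qed

lemma lin_sum: "(\<Sum>i = 0..s. (a + i * d) * x i) = (\<Sum>i=0..s. x i) * a + (\<Sum>i=0..s. i * x i) * (d::nat)"
proof -
  have "(\<Sum>i = 0..s. (a + i * d) * x i) = (\<Sum>i=0..s. a * x i) + (\<Sum>i=0..s. d * (i * x i))"
    by (simp add: sum.distrib algebra_simps)
  also have "\<dots> = (\<Sum>i=0..s. x i) * a + (\<Sum>i=0..s. i * x i) * d"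
    by (simp add: sum_distrib_left[symmetric] mult.commute)
  finally show ?thesis .
qed

definition repr :: "nat \<Rightarrow> nat \<Rightarrow> nat \<Rightarrow> nat \<Rightarrow> bool" where
  "repr a d s n = (\<exists>x :: nat \<Rightarrow> nat. n = (\<Sum>i = 0..s. (a + i * d) * x i))"

lemma repr_iff:
  assumes "s \<ge> 1"
  shows "repr a d s n \<longleftrightarrow> (\<exists>K J. J \<le> s * K \<and> n = K * a + J * d)"
proof
  assume "repr a d s n"
  then obtain x where x: "n = (\<Sum>i = 0..s. (a + i * d) * x i)" unfolding repr_def by blast
  have "n = (\<Sum>i=0..s. x i) * a + (\<Sum>i=0..s. i * x i) * d"
    unfolding x by (rule lin_sum)
  moreover have "(\<Sum>i=0..s. i * x i) \<le> s * (\<Sum>i=0..s. x i)"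
    unfolding sum_distrib_left by (rule sum_mono) auto
  ultimately show "\<exists>K J. J \<le> s * K \<and> n = K * a + J * d" by blast
next
  assume "\<exists>K J. J \<le> s * K \<and> n = K * a + J * d"
  then obtain K J where KJ: "J \<le> s * K" "n = K * a + J * d" by blast
  obtain x :: "nat \<Rightarrow> nat" where x: "(\<Sum>i=0..s. x i) = K" "(\<Sum>i=0..s. i * x i) = J"
    using rep_construct[OF assms KJ(1)] by blast
  have "(\<Sum>i = 0..s. (a + i * d) * x i) = (\<Sum>i=0..s. x i) * a + (\<Sum>i=0..s. i * x i) * d"
    by (rule lin_sum)
  thus "repr a d s n" unfolding repr_def using x KJ by metis
qed

locale ads =
  fixes a d s :: nat
  assumes a2: "a \<ge> 2" and s1: "s \<ge> 1" and cop: "gcd a d = 1"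
begin

definition c :: "nat \<Rightarrow> nat" where "c j = (j + s - 1) div s"
definition f :: "nat \<Rightarrow> nat" where "f j = (j * d) mod a"
definition K :: "nat \<Rightarrow> nat" where "K j = c j + (j * d) div a"

lemma j_le_c: "j \<le> s * c j"
proof -
  have "j + s - 1 = s * ((j + s - 1) div s) + (j + s - 1) mod s" by simp
  moreover have "(j + s - 1) mod s \<le> s - 1" using s1
    by (metis One_nat_def Suc_pred le_simps(2) mod_less_divisor zero_less_one less_le_trans)
  ultimately show ?thesis unfolding c_def using s1 by linarith
qed

lemma c_min: "J \<le> s * K' \<Longrightarrow> c J \<le> K'"
proof -
  assume h: "J \<le> s * K'"
  have "J + s - 1 < s * Suc K'" using h s1 by simp
  hence "(J + s - 1) div s < Suc K'"
    by (metis less_mult_imp_div_less mult.commute)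
  thus ?thesis unfolding c_def by simp
qed

lemma c_mono: "j \<le> J \<Longrightarrow> c j \<le> c J"
  unfolding c_def by (intro div_le_mono) simp

lemma f_inj: "inj_on f {..<a}"
proof (rule inj_onI)
  fix x y assume xy: "x \<in> {..<a}" "y \<in> {..<a}" "f x = f y"
  show "x = y"
  proof (rule ccontr)
    assume ne: "x \<noteq> y"
    have gen: "u < a \<Longrightarrow> v < a \<Longrightarrow> v < u \<Longrightarrow> f u = f v \<Longrightarrow> False" for u v
    proof -
      assume u: "u < a" "v < a" "v < u" "f u = f v"
      hence "a dvd u * d - v * d" unfolding f_def
        by (metis mod_eq_dvd_iff_nat mult_le_mono1 less_imp_le)
      hence "a dvd (u - v) * d" by (simp add: diff_mult_distrib)
      hence "a dvd (u - v)" using cop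
        by (metis coprime_dvd_mult_left_iff coprime_iff_gcd_eq_1)
      moreover have "0 < u - v" "u - v < a" using u by auto
      ultimately show False by (meson nat_dvd_not_less)
    qed
    show False using ne xy gen[of x y] gen[of y x] by (cases "x < y") auto
  qed
qed

lemma f_bij: "f ` {..<a} = {..<a}"
proof (rule endo_inj_surj)
  show "f ` {..<a} \<subseteq> {..<a}" unfolding f_def using a2 by auto
qed (auto simp: f_inj)

lemma f_mod: "f (J mod a) = f J"
  unfolding f_def by (simp add: mod_mult_left_eq)

lemma w_eq: "K j * a + f j = c j * a + j * d"
  unfolding K_def f_def by (simp add: algebra_simps)

lemma f_pos: "0 < j \<Longrightarrow> j < a \<Longrightarrow> 0 < f j"
  using f_inj unfolding inj_on_def
  by (metis f_def lessThan_iff mod_0 mult_0 gr0I a2 less_le_trans zero_less_numeral le_less)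

lemma K0: "K 0 = 0"
  unfolding K_def c_def using s1 by simp

lemma NR_char: "NR a d s = (\<Union>j\<in>{..<a}. (\<lambda>t. f j + t * a) ` {..<K j})"
proof (intro equalityI subsetI)
  fix n assume "n \<in> NR a d s"
  hence n: "0 < n" "\<not> repr a d s n" unfolding NR_def repr_def by auto
  have "n mod a \<in> f ` {..<a}" using f_bij a2 by simp
  then obtain j where j: "j < a" "f j = n mod a" by auto
  have neq: "n = f j + (n div a) * a" using j by simp
  have "n div a < K j"
  proof (rule ccontr)
    assume "\<not> n div a < K j"
    then obtain e where e: "n div a = K j + e" using le_Suc_ex by (metis not_less)
    hence "n = (c j + e) * a + j * d"
      using neq w_eq[of j] by (simp add: algebra_simps)
    moreover have "j \<le> s * (c j + e)"
      using j_le_c[of j] by (meson le_add1 le_trans mult_le_mono2)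
    ultimately have "repr a d s n" using repr_iff[OF s1] by blast
    with n show False by simp
  qed
  thus "n \<in> (\<Union>j\<in>{..<a}. (\<lambda>t. f j + t * a) ` {..<K j})" using j neq by blast
next
  fix n assume "n \<in> (\<Union>j\<in>{..<a}. (\<lambda>t. f j + t * a) ` {..<K j})"
  then obtain j t where jt: "j < a" "t < K j" "n = f j + t * a" by auto
  have "j \<noteq> 0" using jt K0 by (metis not_less0)
  hence pos: "0 < n" using f_pos jt by auto
  have "\<not> repr a d s n"
  proof
    assume "repr a d s n"
    then obtain K' J where KJ: "J \<le> s * K'" "n = K' * a + J * d" using repr_iff[OF s1] by blast
    have "f J = n mod a" using KJ unfolding f_def by simp
    also have "\<dots> = f j" using jt unfolding f_def by simp
    finally have "f (J mod a) = f j" by (simp add: f_mod)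
    hence "J mod a = j" using f_inj jt a2 unfolding inj_on_def by simp
    hence "j \<le> J" by (metis mod_less_eq_dividend)
    hence "c j \<le> K'" using c_mono c_min[OF KJ(1)] le_trans by blast
    hence "c j * a + j * d \<le> n" using KJ \<open>j \<le> J\<close>
      by (simp add: add_mono mult_le_mono1)
    moreover have "n < K j * a + f j" using jt by simp
    ultimately show False using w_eq[of j] by simp
  qed
  thus "n \<in> NR a d s" using pos unfolding NR_def repr_def by auto
qed

end


context ads begin

lemma ceil_c: "real_of_int \<lceil>real n / real s\<rceil> = real (c n)"
proof -
  have h1: "n \<le> s * c n" by (rule j_le_c)
  have "(n + s - 1) div s * s \<le> n + s - 1" by (rule div_times_less_eq_dividend)
  hence "s * c n \<le> n + s - 1" unfolding c_def by (simp add: mult.commute)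
  hence h2: "s * c n < n + s" using s1 by linarith
  have sp: "real s > 0" using s1 by simp
  have "real n \<le> real s * real (c n)" using h1 by (metis of_nat_le_iff of_nat_mult)
  hence u1: "real n / real s \<le> real (c n)" using sp by (simp add: divide_simps mult.commute)
  have "real s * real (c n) < real n + real s" using h2 by (metis of_nat_less_iff of_nat_mult of_nat_add)
  hence u2: "real (c n) - 1 < real n / real s" using sp by (simp add: divide_simps algebra_simps)
  have "\<lceil>real n / real s\<rceil> = int (c n)"
    by (rule ceiling_unique) (use u1 u2 in auto)
  thus ?thesis by simp
qed

lemma final:
  assumes m1: "m \<ge> 1"
  shows "real m * powsumNR a d s (m - 1) =
    real a ^ (m - 1) * (\<Sum>j<a. bernpoly m (real (c j) + real j * real d / real a)) - bernoulli_num m"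
proof -
  have apos: "real a > 0" using a2 by simp
  have fl: "f j < a" for j unfolding f_def using a2 by simp
  have "powsumNR a d s (m-1) = (\<Sum>j<a. \<Sum>n\<in>(\<lambda>t. f j + t * a) ` {..<K j}. real n ^ (m-1))"
    unfolding powsumNR_def NR_char
  proof (rule sum.UNION_disjoint)
    show "\<forall>i\<in>{..<a}. \<forall>j\<in>{..<a}. i \<noteq> j \<longrightarrow>
      (\<lambda>t. f i + t * a) ` {..<K i} \<inter> (\<lambda>t. f j + t * a) ` {..<K j} = {}"
    proof (intro ballI impI)
      fix i j assume ij: "i \<in> {..<a}" "j \<in> {..<a}" "i \<noteq> j"
      have "f i \<noteq> f j" using f_inj ij unfolding inj_on_def by blast
      show "(\<lambda>t. f i + t * a) ` {..<K i} \<inter> (\<lambda>t. f j + t * a) ` {..<K j} = {}"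
      proof (rule ccontr)
        assume "\<not> ?thesis"
        then obtain t u where "f i + t * a = f j + u * a" by auto
        hence "(f i + t * a) mod a = (f j + u * a) mod a" by simp
        hence "f i = f j" using fl by simp
        with \<open>f i \<noteq> f j\<close> show False by simp
      qed
    qed
  qed auto
  also have "\<dots> = (\<Sum>j<a. \<Sum>t<K j. real (f j + t * a) ^ (m-1))"
  proof (rule sum.cong[OF refl])
    fix j
    have "inj_on (\<lambda>t. f j + t * a) {..<K j}" using a2 by (intro inj_onI) simp
    thus "(\<Sum>n\<in>(\<lambda>t. f j + t * a) ` {..<K j}. real n ^ (m-1)) = (\<Sum>t<K j. real (f j + t * a) ^ (m-1))"
      by (simp add: sum.reindex)
  qed
  finally have ps: "powsumNR a d s (m-1) = (\<Sum>j<a. \<Sum>t<K j. real (f j + t * a) ^ (m-1))" .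
  have each: "real m * (\<Sum>t<K j. real (f j + t * a) ^ (m-1)) =
      real a ^ (m-1) * (bernpoly m (real (c j) + real j * real d / real a) - bernpoly m (real (f j) / real a))" for j
  proof -
    have "real (f j + t * a) ^ (m-1) = real a ^ (m-1) * (real (f j) / real a + real t) ^ (m-1)" for t
    proof -
      have "real (f j + t * a) = real a * (real (f j) / real a + real t)" using apos by (simp add: field_simps)
      thus ?thesis by (simp add: power_mult_distrib)
    qed
    hence "real m * (\<Sum>t<K j. real (f j + t * a) ^ (m-1)) =
        real a ^ (m-1) * (real m * (\<Sum>t<K j. (real (f j) / real a + real t) ^ (m-1)))"
      by (simp add: sum_distrib_left algebra_simps)
    also have "\<dots> = real a ^ (m-1) * (bernpoly m (real (f j) / real a + real (K j)) - bernpoly m (real (f j) / real a))"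
      using bp_sum[OF m1] by simp
    also have "real (f j) / real a + real (K j) = real (c j) + real j * real d / real a"
    proof -
      have "real (K j) * real a + real (f j) = real (c j) * real a + real j * real d"
        using w_eq[of j] by (metis of_nat_add of_nat_mult)
      thus ?thesis using apos by (simp add: field_simps)
    qed
    finally show ?thesis .
  qed
  have re: "(\<Sum>j<a. bernpoly m (real (f j) / real a)) = (\<Sum>r<a. bernpoly m (real r / real a))"
  proof -
    have "(\<Sum>r<a. bernpoly m (real r / real a)) = (\<Sum>r\<in>f ` {..<a}. bernpoly m (real r / real a))"
      by (simp add: f_bij)
    also have "\<dots> = (\<Sum>j<a. bernpoly m (real (f j) / real a))"
      by (simp add: sum.reindex f_inj)
    finally show ?thesis by simp
  qed
  have "real m * powsumNR a d s (m - 1) = (\<Sum>j<a. real m * (\<Sum>t<K j. real (f j + t * a) ^ (m-1)))"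
    by (subst ps) (simp add: sum_distrib_left)
  also have "\<dots> = (\<Sum>j<a. real a ^ (m-1) * (bernpoly m (real (c j) + real j * real d / real a) - bernpoly m (real (f j) / real a)))"
    by (rule sum.cong[OF refl]) (rule each)
  also have "\<dots> = real a ^ (m-1) * (\<Sum>j<a. bernpoly m (real (c j) + real j * real d / real a))
      - real a ^ (m-1) * (\<Sum>j<a. bernpoly m (real (f j) / real a))"
    by (simp only: sum_subtractf sum_distrib_left right_diff_distrib)
  also have "real a ^ (m-1) * (\<Sum>j<a. bernpoly m (real (f j) / real a)) = bernoulli_num m"
    using re bp_mult[of a m] a2 m1 by simp
  finally show ?thesis .
qed

end

theorem mainTheorem3:
  fixes a d s m :: nat
  assumes "a \<ge> 2" and "d \<ge> 1" and "gcd a d = 1" and "1 \<le> s" and "s < a" and "m \<ge> 1"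
  shows "real m * powsumNR a d s (m - 1) =
    real a ^ (m - 1) * (\<Sum>n = 0..a - 1.
        bernpoly m (real_of_int \<lceil>real n / real s\<rceil> + real n * real d / real a))
    - bernoulli_num m"
proof -
  interpret ads a d s using assms by unfold_locales auto
  have "{0..a-1} = {..<a}" using assms by auto
  hence "(\<Sum>n = 0..a - 1. bernpoly m (real_of_int \<lceil>real n / real s\<rceil> + real n * real d / real a))
     = (\<Sum>j<a. bernpoly m (real (c j) + real j * real d / real a))"
    by (simp add: ceil_c)
  thus ?thesis using final[OF assms(6)] by simp
qed

end
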